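(* Let $E$ be a real or complex JB$^*$-triple and let $M$ be an $M$-ideal of $E$. Then $\delta(a,b)(M)\subseteq M$ for all $a,b\in E$, where $\delta(a,b)=L(a,b)-L(b,a)$. In particular, if $M$ is an $M$-summand of a real JBW$^*$-triple $W$, then $\delta(a,b)(M)\subseteq M$ for all $a,b\in W$.
   Context: A real JB$^*$-triple is a norm-closed real subspace of a complex JB$^*$-triple closed under the triple product; a real JBW$^*$-triple is one that is a dual Banach space. $L(a,b)$ denotes the operator $x\mapsto\{a,b,x\}$. A projection $Q$ on a Banach space $X$ is an $L$-projection if $\|x\|=\|Qx\|+\|x-Qx\|$ for all $x$; a closed subspace $M$ of $V$ is an $M$-ideal if $M^{\circ}=\{\varphi\in V^*:\varphi|_M\equiv0\}$ is the image of an $L$-projection on $V^*$. A projection $P$ on $V$ is an $M$-projection if $\|x\|=\max\{\|Px\|,\|x-Px\|\}$ for all $x$; its image is an $M$-summand. *)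

theory Defs
  imports "HOL-Analysis.Analysis"
begin

text \<open>Multiplication by i is the real-linear map J; complex scalar multiplication is
  (a + i b) x = a x + b J x.\<close>

definition cscale :: "('a::real_normed_vector \<Rightarrow> 'a) \<Rightarrow> complex \<Rightarrow> 'a \<Rightarrow> 'a" where
  "cscale J c x = Re c *\<^sub>R x + Im c *\<^sub>R J x"

definition complex_structure :: "('a::real_normed_vector \<Rightarrow> 'a) \<Rightarrow> bool" where
  "complex_structure J \<longleftrightarrow> linear J \<and> (\<forall>x. J (J x) = - x) \<and>
     (\<forall>c x. norm (cscale J c x) = cmod c * norm x)"

primrec op_pow :: "('a::real_normed_vector \<Rightarrow>\<^sub>L 'a) \<Rightarrow> nat \<Rightarrow> ('a \<Rightarrow>\<^sub>L 'a)" where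
  "op_pow S 0 = id_blinfun"
| "op_pow S (Suc n) = S o\<^sub>L op_pow S n"

definition op_exp :: "('a::real_normed_vector \<Rightarrow>\<^sub>L 'a) \<Rightarrow> ('a \<Rightarrow>\<^sub>L 'a)" where
  "op_exp S = (\<Sum>n. (1 / fact n) *\<^sub>R op_pow S n)"

definition op_invertible :: "('a::real_normed_vector \<Rightarrow>\<^sub>L 'a) \<Rightarrow> bool" where
  "op_invertible S \<longleftrightarrow> (\<exists>R. S o\<^sub>L R = id_blinfun \<and> R o\<^sub>L S = id_blinfun)"

definition cspectrum :: "('a::real_normed_vector \<Rightarrow> 'a) \<Rightarrow> ('a \<Rightarrow>\<^sub>L 'a) \<Rightarrow> complex set" where
  "cspectrum J S = {c. \<not> op_invertible (S - Blinfun (cscale J c))}"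

definition hermitian :: "('a::real_normed_vector \<Rightarrow> 'a) \<Rightarrow> ('a \<Rightarrow>\<^sub>L 'a) \<Rightarrow> bool" where
  "hermitian J S \<longleftrightarrow>
     (\<forall>t::real. \<forall>x. norm (blinfun_apply (op_exp (t *\<^sub>R (Blinfun J o\<^sub>L S))) x) = norm x)"

definition complex_JB_triple ::
    "('a::banach \<Rightarrow> 'a) \<Rightarrow> ('a \<Rightarrow> 'a \<Rightarrow> 'a \<Rightarrow> 'a) \<Rightarrow> bool" where
  "complex_JB_triple J T \<longleftrightarrow>
     complex_structure J \<and>
     (\<forall>y z. linear (\<lambda>x. T x y z)) \<and> (\<forall>x z. linear (\<lambda>y. T x y z)) \<and>
     (\<forall>x y. linear (\<lambda>z. T x y z)) \<and>
     (\<forall>x y z. T (J x) y z = J (T x y z)) \<and>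
     (\<forall>x y z. T x (J y) z = - J (T x y z)) \<and>
     (\<forall>x y z. T x y z = T z y x) \<and>
     (\<exists>K. \<forall>x y z. norm (T x y z) \<le> K * norm x * norm y * norm z) \<and>
     (\<forall>a b x y z. T a b (T x y z) =
         T (T a b x) y z - T x (T b a y) z + T x y (T a b z)) \<and>
     (\<forall>a. hermitian J (Blinfun (T a a)) \<and>
          cspectrum J (Blinfun (T a a)) \<subseteq> complex_of_real ` {0..}) \<and>
     (\<forall>a. norm (T a a a) = norm a ^ 3)"

definition real_JB_triple ::
    "('a::banach \<Rightarrow> 'a) \<Rightarrow> ('a \<Rightarrow> 'a \<Rightarrow> 'a \<Rightarrow> 'a) \<Rightarrow> 'a set \<Rightarrow> bool" where
  "real_JB_triple J T E \<longleftrightarrow> complex_JB_triple J T \<and> closed E \<and> subspace E \<and>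
     (\<forall>x\<in>E. \<forall>y\<in>E. \<forall>z\<in>E. T x y z \<in> E)"

text \<open>Real JBW*-triple: real JB*-triple which is (isometrically isomorphic to) the dual
  of a Banach space X (type 'p).\<close>
definition real_JBW_triple ::
    "('a::banach \<Rightarrow> 'a) \<Rightarrow> ('a \<Rightarrow> 'a \<Rightarrow> 'a \<Rightarrow> 'a) \<Rightarrow> 'a set
      \<Rightarrow> (('p::banach \<Rightarrow>\<^sub>L real) \<Rightarrow> 'a) \<Rightarrow> bool" where
  "real_JBW_triple J T W \<Phi> \<longleftrightarrow> real_JB_triple J T W \<and>
     linear \<Phi> \<and> range \<Phi> = W \<and> (\<forall>f. norm (\<Phi> f) = norm f)"

text \<open>Dual of the normed space E (a subset of 'a, with the restricted norm) over the
  scalar field 'k acting on E by smul.  Functionals are normalised to vanish off E.\<close>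
definition dual_sp :: "('k::real_normed_field \<Rightarrow> 'a::real_normed_vector \<Rightarrow> 'a) \<Rightarrow> 'a set
     \<Rightarrow> ('a \<Rightarrow> 'k) set" where
  "dual_sp smul E = {\<phi>. (\<forall>x\<in>E. \<forall>y\<in>E. \<phi> (x + y) = \<phi> x + \<phi> y) \<and>
      (\<forall>c. \<forall>x\<in>E. \<phi> (smul c x) = c * \<phi> x) \<and>
      (\<exists>K. \<forall>x\<in>E. norm (\<phi> x) \<le> K * norm x) \<and> (\<forall>x. x \<notin> E \<longrightarrow> \<phi> x = 0)}"

definition dual_norm :: "'a::real_normed_vector set \<Rightarrow> ('a \<Rightarrow> 'k::real_normed_field) \<Rightarrow> real" where
  "dual_norm E \<phi> = Sup ((\<lambda>x. norm (\<phi> x)) ` {x\<in>E. norm x \<le> 1})"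

definition annihilator :: "('k::real_normed_field \<Rightarrow> 'a::real_normed_vector \<Rightarrow> 'a) \<Rightarrow> 'a set
     \<Rightarrow> 'a set \<Rightarrow> ('a \<Rightarrow> 'k) set" where
  "annihilator smul E M = {\<phi> \<in> dual_sp smul E. \<forall>x\<in>M. \<phi> x = 0}"

definition L_projection :: "('k::real_normed_field \<Rightarrow> 'a::real_normed_vector \<Rightarrow> 'a) \<Rightarrow> 'a set
     \<Rightarrow> (('a \<Rightarrow> 'k) \<Rightarrow> ('a \<Rightarrow> 'k)) \<Rightarrow> bool" where
  "L_projection smul E Q \<longleftrightarrow>
     (\<forall>\<phi>\<in>dual_sp smul E. Q \<phi> \<in> dual_sp smul E \<and> Q (Q \<phi>) = Q \<phi> \<and>
        dual_norm E \<phi> = dual_norm E (Q \<phi>) + dual_norm E (\<lambda>x. \<phi> x - Q \<phi> x)) \<and>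
     (\<forall>\<phi>\<in>dual_sp smul E. \<forall>\<psi>\<in>dual_sp smul E. Q (\<lambda>x. \<phi> x + \<psi> x) = (\<lambda>x. Q \<phi> x + Q \<psi> x)) \<and>
     (\<forall>c. \<forall>\<phi>\<in>dual_sp smul E. Q (\<lambda>x. c * \<phi> x) = (\<lambda>x. c * Q \<phi> x))"

definition M_ideal :: "('k::real_normed_field \<Rightarrow> 'a::real_normed_vector \<Rightarrow> 'a) \<Rightarrow> 'a set
     \<Rightarrow> 'a set \<Rightarrow> bool" where
  "M_ideal smul E M \<longleftrightarrow> M \<subseteq> E \<and> closed M \<and> 0 \<in> M \<and>
     (\<forall>x\<in>M. \<forall>y\<in>M. x + y \<in> M) \<and> (\<forall>c. \<forall>x\<in>M. smul c x \<in> M) \<and>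
     (\<exists>Q. L_projection smul E Q \<and> Q ` dual_sp smul E = annihilator smul E M)"

definition M_projection :: "'a::real_normed_vector set \<Rightarrow> ('a \<Rightarrow> 'a) \<Rightarrow> bool" where
  "M_projection W P \<longleftrightarrow>
     (\<forall>x\<in>W. P x \<in> W \<and> P (P x) = P x \<and> norm x = max (norm (P x)) (norm (x - P x))) \<and>
     (\<forall>x\<in>W. \<forall>y\<in>W. P (x + y) = P x + P y) \<and> (\<forall>c. \<forall>x\<in>W. P (c *\<^sub>R x) = c *\<^sub>R P x)"

definition M_summand :: "'a::real_normed_vector set \<Rightarrow> 'a set \<Rightarrow> bool" where
  "M_summand W M \<longleftrightarrow> (\<exists>P. M_projection W P \<and> M = P ` W)"

definition delta :: "('a \<Rightarrow> 'a \<Rightarrow> 'a \<Rightarrow> 'a::ab_group_add) \<Rightarrow> 'a \<Rightarrow> 'a \<Rightarrow> 'a \<Rightarrow> 'a" where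
  "delta T a b x = T a b x - T b a x"

end

theory Submission
  imports Defs
begin


lemma dual_bdd:
  assumes "\<phi> \<in> dual_sp smul E"
  shows "bdd_above ((\<lambda>x. norm (\<phi> x)) ` {x\<in>E. norm x \<le> 1})"
proof -
  obtain K where K: "\<forall>x\<in>E. norm (\<phi> x) \<le> K * norm x" using assms unfolding dual_sp_def by blast
  have "norm (\<phi> x) \<le> \<bar>K\<bar>" if "x \<in> E" "norm x \<le> 1" for x
  proof -
    have "norm (\<phi> x) \<le> K * norm x" using K that by blast
    also have "\<dots> \<le> \<bar>K\<bar> * norm x" by (simp add: mult_right_mono)
    also have "\<dots> \<le> \<bar>K\<bar>" using that by (simp add: mult_left_le)
    finally show ?thesis .
  qed
  then show ?thesis by (intro bdd_aboveI2[where M="\<bar>K\<bar>"]) auto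
qed

lemma dual_zero:
  fixes smul :: "'k::real_normed_field \<Rightarrow> 'a::real_normed_vector \<Rightarrow> 'a"
  assumes "\<phi> \<in> dual_sp smul E" "0 \<in> E" and sm: "\<And>r y. smul (of_real r) y = r *\<^sub>R y"
  shows "\<phi> 0 = 0"
proof -
  have "\<phi> (smul (of_real 0) 0) = of_real 0 * \<phi> 0" using assms unfolding dual_sp_def by blast
  then show ?thesis using sm[of 0 0] by simp
qed

lemma dual_norm_nonneg:
  fixes smul :: "'k::real_normed_field \<Rightarrow> 'a::real_normed_vector \<Rightarrow> 'a"
  assumes "\<phi> \<in> dual_sp smul E" "0 \<in> E"
  shows "0 \<le> dual_norm E \<phi>"
proof -
  have "norm (\<phi> 0) \<le> dual_norm E \<phi>" unfolding dual_norm_def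
    by (rule cSUP_upper[OF _ dual_bdd[OF assms(1)]]) (use assms in auto)
  then show ?thesis using norm_ge_zero order_trans by blast
qed

lemma dual_norm_le:
  fixes smul :: "'k::real_normed_field \<Rightarrow> 'a::real_normed_vector \<Rightarrow> 'a"
  assumes "\<phi> \<in> dual_sp smul E" "x \<in> E"
    and sm: "\<And>r y. smul (of_real r) y = r *\<^sub>R y"
    and Esc: "\<And>r x. x \<in> E \<Longrightarrow> r *\<^sub>R x \<in> E"
  shows "norm (\<phi> x) \<le> dual_norm E \<phi> * norm x"
proof (cases "x = 0")
  case True
  have "0 \<in> E" using Esc[OF assms(2), of 0] by simp
  then show ?thesis using True dual_zero[OF assms(1) _ sm] by simp
next
  case False
  define y where "y = (1 / norm x) *\<^sub>R x"
  have yE: "y \<in> E" using Esc assms(2) y_def by blast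
  have ny: "norm y \<le> 1" using False by (simp add: y_def)
  have "\<phi> (smul (of_real (1 / norm x)) x) = of_real (1 / norm x) * \<phi> x"
    using assms(1,2) unfolding dual_sp_def by blast
  then have "\<phi> y = of_real (1 / norm x) * \<phi> x" using sm[of "1 / norm x" x] y_def by simp
  then have "norm (\<phi> y) = norm (\<phi> x) / norm x" by (simp add: norm_mult norm_divide)
  moreover have "norm (\<phi> y) \<le> dual_norm E \<phi>" unfolding dual_norm_def
    by (rule cSUP_upper[OF _ dual_bdd[OF assms(1)]]) (use yE ny in auto)
  ultimately show ?thesis using False by (simp add: divide_le_eq mult.commute)
qed

lemma dual_norm_least:
  fixes \<phi> :: "'a::real_normed_vector \<Rightarrow> 'k::real_normed_field"
  assumes "0 \<in> E" "0 \<le> B" "\<And>x. x \<in> E \<Longrightarrow> norm (\<phi> x) \<le> B * norm x"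
  shows "dual_norm E \<phi> \<le> B"
  unfolding dual_norm_def
proof (rule cSUP_least)
  show "{x \<in> E. norm x \<le> 1} \<noteq> {}" using assms(1) by auto
  fix x assume "x \<in> {x \<in> E. norm x \<le> 1}"
  then have "norm (\<phi> x) \<le> B * norm x" "norm x \<le> 1" using assms(3) by auto
  then show "norm (\<phi> x) \<le> B" using assms(2) by (meson mult_left_le order_trans)
qed

lemma dual_add:
  assumes "\<phi> \<in> dual_sp smul E" "\<psi> \<in> dual_sp smul E"
  shows "(\<lambda>x. \<phi> x + \<psi> x) \<in> dual_sp smul E"
proof -
  obtain K1 where K1: "\<forall>x\<in>E. norm (\<phi> x) \<le> K1 * norm x" using assms unfolding dual_sp_def by blast
  obtain K2 where K2: "\<forall>x\<in>E. norm (\<psi> x) \<le> K2 * norm x" using assms unfolding dual_sp_def by blast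
  have "norm (\<phi> x + \<psi> x) \<le> (K1 + K2) * norm x" if "x \<in> E" for x
  proof -
    have "norm (\<phi> x + \<psi> x) \<le> norm (\<phi> x) + norm (\<psi> x)" by (rule norm_triangle_ineq)
    also have "\<dots> \<le> K1 * norm x + K2 * norm x" using K1 K2 that by (meson add_mono)
    finally show ?thesis by (simp add: distrib_right)
  qed
  then have b: "\<exists>K. \<forall>x\<in>E. norm (\<phi> x + \<psi> x) \<le> K * norm x" by blast
  show ?thesis using assms b unfolding dual_sp_def by (auto simp: algebra_simps)
qed

lemma dual_scale:
  assumes "\<phi> \<in> dual_sp smul E"
  shows "(\<lambda>x. c * \<phi> x) \<in> dual_sp smul E"
proof -
  obtain K1 where K1: "\<forall>x\<in>E. norm (\<phi> x) \<le> K1 * norm x" using assms unfolding dual_sp_def by blast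
  have "\<forall>x\<in>E. norm (c * \<phi> x) \<le> (norm c * K1) * norm x"
    using K1 by (simp add: norm_mult mult.assoc mult_left_mono)
  then have b: "\<exists>K. \<forall>x\<in>E. norm (c * \<phi> x) \<le> K * norm x" by blast
  show ?thesis using assms b unfolding dual_sp_def by (auto simp: algebra_simps)
qed

lemma dual_diff:
  assumes "\<phi> \<in> dual_sp smul E" "\<psi> \<in> dual_sp smul E"
  shows "(\<lambda>x. \<phi> x - \<psi> x) \<in> dual_sp smul E"
proof -
  have "(\<lambda>x. \<phi> x + (-1) * \<psi> x) \<in> dual_sp smul E"
    by (rule dual_add[OF assms(1) dual_scale[OF assms(2)]])
  then show ?thesis by simp
qed


lemma mideal_dissipative:
  fixes smul :: "'k::real_normed_field \<Rightarrow> 'a::real_normed_vector \<Rightarrow> 'a"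
  assumes MI: "M_ideal smul E M"
    and sm: "\<And>r y. smul (of_real r) y = r *\<^sub>R y"
    and Eadd: "\<And>x y. x \<in> E \<Longrightarrow> y \<in> E \<Longrightarrow> x + y \<in> E"
    and Esc: "\<And>r x. x \<in> E \<Longrightarrow> r *\<^sub>R x \<in> E"
    and Esm: "\<And>c x. x \<in> E \<Longrightarrow> smul c x \<in> E"
    and DE: "\<And>x. x \<in> E \<Longrightarrow> D x \<in> E"
    and Dadd: "\<And>x y. x \<in> E \<Longrightarrow> y \<in> E \<Longrightarrow> D (x + y) = D x + D y"
    and Dsm: "\<And>c x. x \<in> E \<Longrightarrow> D (smul c x) = smul c (D x)"
    and Dbd: "\<And>x. x \<in> E \<Longrightarrow> norm (D x) \<le> CD * norm x"
    and t0: "0 < t0" and C0: "0 \<le> C"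
    and diss: "\<And>t x. 0 < t \<Longrightarrow> t \<le> t0 \<Longrightarrow> x \<in> E \<Longrightarrow>
        norm (x + t *\<^sub>R D x) \<le> (1 + C * t^2) * norm x \<and> norm (x - t *\<^sub>R D x) \<le> (1 + C * t^2) * norm x"
    and phi: "\<phi> \<in> annihilator smul E M" and xM: "x \<in> M"
  shows "\<phi> (D x) = 0"
proof -
  obtain Q where LQ: "L_projection smul E Q" and QR: "Q ` dual_sp smul E = annihilator smul E M"
    using MI unfolding M_ideal_def by blast
  define Du where "Du = dual_sp smul E"
  define N :: "('a \<Rightarrow> 'k) \<Rightarrow> real" where "N = dual_norm E"
  have E0: "0 \<in> E" using Esc[of _ 0] MI unfolding M_ideal_def by (metis Esc scale_zero_left subsetD)
  have ME: "M \<subseteq> E" using MI unfolding M_ideal_def by blast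
  have LQ': "\<forall>\<rho>\<in>Du. Q \<rho> \<in> Du \<and> Q (Q \<rho>) = Q \<rho> \<and> N \<rho> = N (Q \<rho>) + N (\<lambda>x. \<rho> x - Q \<rho> x)"
    "\<forall>\<rho>\<in>Du. \<forall>\<psi>\<in>Du. Q (\<lambda>x. \<rho> x + \<psi> x) = (\<lambda>x. Q \<rho> x + Q \<psi> x)"
    "\<forall>c. \<forall>\<rho>\<in>Du. Q (\<lambda>x. c * \<rho> x) = (\<lambda>x. c * Q \<rho> x)"
    using LQ unfolding L_projection_def Du_def N_def by blast+
  have Qin: "\<And>\<rho>. \<rho> \<in> Du \<Longrightarrow> Q \<rho> \<in> Du" and Qid: "\<And>\<rho>. \<rho> \<in> Du \<Longrightarrow> Q (Q \<rho>) = Q \<rho>"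
    and Qn: "\<And>\<rho>. \<rho> \<in> Du \<Longrightarrow> N \<rho> = N (Q \<rho>) + N (\<lambda>x. \<rho> x - Q \<rho> x)"
    using LQ'(1) by blast+
  have Qadd: "\<And>\<rho> \<psi>. \<rho> \<in> Du \<Longrightarrow> \<psi> \<in> Du \<Longrightarrow> Q (\<lambda>x. \<rho> x + \<psi> x) = (\<lambda>x. Q \<rho> x + Q \<psi> x)"
    using LQ'(2) by blast
  have Qsc: "\<And>c \<rho>. \<rho> \<in> Du \<Longrightarrow> Q (\<lambda>x. c * \<rho> x) = (\<lambda>x. c * Q \<rho> x)"
    using LQ'(3) by blast
  have Ddiff: "\<And>a b. a \<in> Du \<Longrightarrow> b \<in> Du \<Longrightarrow> (\<lambda>x. a x - b x) \<in> Du"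
    using dual_diff unfolding Du_def by blast
  have Dadd': "\<And>a b. a \<in> Du \<Longrightarrow> b \<in> Du \<Longrightarrow> (\<lambda>x. a x + b x) \<in> Du"
    using dual_add unfolding Du_def by blast
  have Dsc': "\<And>a c. a \<in> Du \<Longrightarrow> (\<lambda>x. c * a x) \<in> Du"
    using dual_scale unfolding Du_def by blast
  have Nnn: "\<And>a. a \<in> Du \<Longrightarrow> 0 \<le> N a"
    using dual_norm_nonneg[OF _ E0] unfolding Du_def N_def by blast
  have phiD: "\<phi> \<in> Du" using phi unfolding annihilator_def Du_def by blast
  have Qphi: "Q \<phi> = \<phi>"
  proof -
    obtain \<rho> where "\<rho> \<in> Du" "\<phi> = Q \<rho>" using phi QR unfolding Du_def by blast
    then show ?thesis using Qid by simp
  qed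
  have phiadd: "\<And>x y. x \<in> E \<Longrightarrow> y \<in> E \<Longrightarrow> \<phi> (x + y) = \<phi> x + \<phi> y"
    and phism: "\<And>c x. x \<in> E \<Longrightarrow> \<phi> (smul c x) = c * \<phi> x"
    and phi0: "\<And>x. x \<notin> E \<Longrightarrow> \<phi> x = 0"
    using phiD unfolding Du_def dual_sp_def by auto
  obtain K where K: "\<forall>x\<in>E. norm (\<phi> x) \<le> K * norm x" using phiD unfolding Du_def dual_sp_def by blast
  define th' where "th' = (\<lambda>x. if x \<in> E then \<phi> (D x) else 0)"
  have thD: "th' \<in> Du"
  proof -
    have "norm (th' x) \<le> (\<bar>K\<bar> * \<bar>CD\<bar>) * norm x" if "x \<in> E" for x
    proof -
      have "norm (th' x) \<le> K * norm (D x)" using K DE that th'_def by simp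
      also have "\<dots> \<le> \<bar>K\<bar> * norm (D x)" by (simp add: mult_right_mono)
      also have "\<dots> \<le> \<bar>K\<bar> * (\<bar>CD\<bar> * norm x)"
      proof (intro mult_left_mono)
        have "CD * norm x \<le> \<bar>CD\<bar> * norm x" by (simp add: mult_right_mono)
        then show "norm (D x) \<le> \<bar>CD\<bar> * norm x" using Dbd[OF that] by linarith
      qed simp
      finally show ?thesis by (simp add: mult.assoc)
    qed
    then have b: "\<exists>K. \<forall>x\<in>E. norm (th' x) \<le> K * norm x" by blast
    show ?thesis unfolding Du_def dual_sp_def
      using b Eadd Esm DE Dadd Dsm phiadd phism by (auto simp: th'_def)
  qed
  define th where "th = (\<lambda>x. th' x - Q th' x)"
  have thDu: "th \<in> Du" unfolding th_def using Ddiff[OF thD Qin[OF thD]] by simp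
  have Nphi0: "0 \<le> N \<phi>" using Nnn[OF phiD] .
  have Nle: "\<And>\<rho> x. \<rho> \<in> Du \<Longrightarrow> x \<in> E \<Longrightarrow> norm (\<rho> x) \<le> N \<rho> * norm x"
    using dual_norm_le[OF _ _ sm Esc] unfolding Du_def N_def by blast
  have Nleast: "\<And>\<rho> B. 0 \<le> B \<Longrightarrow> (\<And>x. x \<in> E \<Longrightarrow> norm (\<rho> x) \<le> B * norm x) \<Longrightarrow> N \<rho> \<le> B"
    using dual_norm_least[OF E0] unfolding N_def by blast
  define psi where "psi s = (\<lambda>x. \<phi> x + of_real s * th' x)" for s :: real
  have psiD: "psi s \<in> Du" for s unfolding psi_def using Dadd'[OF phiD Dsc'[OF thD]] by simp
  have Qpsi: "Q (psi s) = (\<lambda>x. \<phi> x + of_real s * Q th' x)" for s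
    unfolding psi_def using Qadd[OF phiD Dsc'[OF thD]] Qsc[OF thD] Qphi by auto
  have psidiff: "(\<lambda>x. psi s x - Q (psi s) x) = (\<lambda>x. of_real s * th x)" for s
    unfolding Qpsi by (auto simp: psi_def th_def algebra_simps)
  have psiE: "psi s x = \<phi> (x + s *\<^sub>R D x)" if "x \<in> E" for s x
  proof -
    have "\<phi> (s *\<^sub>R D x) = of_real s * \<phi> (D x)" using phism[OF DE[OF that], of "of_real s"] sm by simp
    then show ?thesis using phiadd[OF that Esc[OF DE[OF that]]] that by (simp add: psi_def th'_def)
  qed
  have key: "N th \<le> C * t * N \<phi>" if t: "0 < t" "t \<le> t0" for t
  proof -
    have b1: "N (psi s) \<le> (1 + C * t^2) * N \<phi>" if s: "s = t \<or> s = -t" for s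
    proof (rule Nleast)
      show "0 \<le> (1 + C * t\<^sup>2) * N \<phi>" using C0 Nphi0 by simp
      fix x assume xE: "x \<in> E"
      have "norm (psi s x) = norm (\<phi> (x + s *\<^sub>R D x))" using psiE[OF xE] by simp
      also have "\<dots> \<le> N \<phi> * norm (x + s *\<^sub>R D x)"
        using Nle[OF phiD] xE Eadd Esc DE by blast
      also have "\<dots> \<le> N \<phi> * ((1 + C * t^2) * norm x)"
        using diss[OF t xE] s Nphi0 by (auto intro: mult_left_mono)
      finally show "norm (psi s x) \<le> (1 + C * t\<^sup>2) * N \<phi> * norm x" by (simp add: ac_simps)
    qed
    have b2: "t * N th \<le> N (\<lambda>x. psi s x - Q (psi s) x)" if s: "s = t \<or> s = -t" for s
    proof -
      have "N th \<le> N (\<lambda>x. psi s x - Q (psi s) x) / t"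
      proof (rule Nleast)
        show "0 \<le> N (\<lambda>x. psi s x - Q (psi s) x) / t"
          using Nnn[OF Ddiff[OF psiD Qin[OF psiD]]] t by auto
        fix x assume xE: "x \<in> E"
        have eq: "psi s x - Q (psi s) x = of_real s * th x" using psidiff[of s] by meson
        have "norm (psi s x - Q (psi s) x) \<le> N (\<lambda>x. psi s x - Q (psi s) x) * norm x"
          using Nle[OF Ddiff[OF psiD[of s] Qin[OF psiD[of s]]] xE] .
        then have "norm (of_real s * th x) \<le> N (\<lambda>x. psi s x - Q (psi s) x) * norm x"
          by (simp only: eq)
        then have "t * norm (th x) \<le> N (\<lambda>x. psi s x - Q (psi s) x) * norm x"
          using s t by (auto simp: norm_mult)
        then show "norm (th x) \<le> N (\<lambda>x. psi s x - Q (psi s) x) / t * norm x"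
          using t by (simp add: field_simps)
      qed
      then show ?thesis using t by (simp add: field_simps)
    qed
    have b3: "2 * N \<phi> \<le> N (Q (psi t)) + N (Q (psi (-t)))"
    proof -
      have "N \<phi> \<le> (N (Q (psi t)) + N (Q (psi (-t)))) / 2"
      proof (rule Nleast)
        show "0 \<le> (N (Q (psi t)) + N (Q (psi (- t)))) / 2"
          using Nnn[OF Qin[OF psiD]] by (simp add: add_nonneg_nonneg)
        fix x assume xE: "x \<in> E"
        have "2 * \<phi> x = Q (psi t) x + Q (psi (-t)) x" unfolding Qpsi by simp
        then have "2 * norm (\<phi> x) \<le> norm (Q (psi t) x) + norm (Q (psi (-t)) x)"
          by (metis norm_mult norm_numeral norm_triangle_ineq)
        also have "\<dots> \<le> N (Q (psi t)) * norm x + N (Q (psi (-t))) * norm x"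
          using Nle[OF Qin[OF psiD] xE] by (meson add_mono)
        finally show "norm (\<phi> x) \<le> (N (Q (psi t)) + N (Q (psi (- t)))) / 2 * norm x"
          by (simp add: field_simps)
      qed
      then show ?thesis by simp
    qed
    have "2 * N \<phi> \<le> (N (psi t) - t * N th) + (N (psi (-t)) - t * N th)"
      using b3 b2[of t] b2[of "-t"] Qn[OF psiD, of t] Qn[OF psiD, of "-t"] by linarith
    also have "\<dots> \<le> 2 * (1 + C * t^2) * N \<phi> - 2 * t * N th" using b1[of t] b1[of "-t"] by (simp add: algebra_simps)
    finally have "2 * t * N th \<le> 2 * C * t^2 * N \<phi>" by (simp add: algebra_simps)
    then show ?thesis using t by (simp add: power2_eq_square field_simps)
  qed
  have Nth0: "N th \<le> 0"
  proof (rule ccontr)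
    assume "\<not> N th \<le> 0"
    then have pos: "0 < N th" by simp
    define t where "t = min t0 (N th / (C * N \<phi> + 1))"
    have "0 < C * N \<phi> + 1" using C0 Nphi0 by (simp add: add_nonneg_pos)
    then have tpos: "0 < t" using t0 pos by (simp add: t_def)
    have "N th \<le> C * t * N \<phi>" using key[OF tpos] t_def by simp
    also have "\<dots> = (C * N \<phi>) * t" by simp
    also have "\<dots> \<le> (C * N \<phi>) * (N th / (C * N \<phi> + 1))"
      using C0 Nphi0 by (intro mult_left_mono) (auto simp: t_def)
    also have "\<dots> < N th"
    proof -
      have cp: "0 \<le> C * N \<phi>" using C0 Nphi0 by simp
      have "(C * N \<phi>) * N th < (C * N \<phi> + 1) * N th" using pos by (simp add: distrib_right)
      then show ?thesis using cp by (simp add: divide_less_eq pos_divide_less_eq add_nonneg_pos mult.commute)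
    qed
    finally show False by simp
  qed
  have th0: "th = (\<lambda>x. 0)"
  proof
    fix x show "th x = 0"
    proof (cases "x \<in> E")
      case True
      then have "norm (th x) \<le> N th * norm x" using Nle[OF thDu] by blast
      also have "\<dots> \<le> 0" using Nth0 by (simp add: mult_nonpos_nonneg)
      finally show ?thesis by simp
    next
      case False then show ?thesis using thDu unfolding Du_def dual_sp_def by blast
    qed
  qed
  have e: "th' x - Q th' x = 0" for x using fun_cong[OF th0, of x] unfolding th_def by simp
  have "Q th' = th'"
  proof (rule ext)
    fix x show "Q th' x = th' x" using e[of x] by simp
  qed
  then have "th' \<in> Q ` Du" using thD by (metis image_eqI)
  then have "th' \<in> annihilator smul E M" using QR Du_def by simp
  then have "th' x = 0" using xM unfolding annihilator_def by blast
  then show ?thesis using xM ME th'_def by auto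
qed



definition hb_good :: "('a::real_normed_vector \<times> real) set \<Rightarrow> ('a \<times> real) set \<Rightarrow> bool" where
  "hb_good G0 G \<longleftrightarrow> G0 \<subseteq> G \<and>
     (\<forall>p\<in>G. \<forall>q\<in>G. (fst p + fst q, snd p + snd q) \<in> G) \<and>
     (\<forall>p\<in>G. \<forall>r. (r *\<^sub>R fst p, r * snd p) \<in> G) \<and>
     (\<forall>p\<in>G. \<forall>q\<in>G. fst p = fst q \<longrightarrow> snd p = snd q) \<and>
     (\<forall>p\<in>G. snd p \<le> norm (fst p))"

lemma hb_extend:
  fixes G :: "('a::real_normed_vector \<times> real) set"
  assumes good: "hb_good G0 G" and z: "z \<notin> fst ` G" and G00: "(0, 0) \<in> G"
  shows "\<exists>G'. hb_good G0 G' \<and> G \<subseteq> G' \<and> G' \<noteq> G"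
proof -
  have Gadd: "\<And>p q. p \<in> G \<Longrightarrow> q \<in> G \<Longrightarrow> (fst p + fst q, snd p + snd q) \<in> G"
    and Gsc: "\<And>p r. p \<in> G \<Longrightarrow> (r *\<^sub>R fst p, r * snd p) \<in> G"
    and Gfun: "\<And>p q. p \<in> G \<Longrightarrow> q \<in> G \<Longrightarrow> fst p = fst q \<Longrightarrow> snd p = snd q"
    and Gdom: "\<And>p. p \<in> G \<Longrightarrow> snd p \<le> norm (fst p)"
    and G0G: "G0 \<subseteq> G"
    using good unfolding hb_good_def by blast+
  define S where "S = (\<lambda>p. snd p - norm (fst p - z)) ` G"
  define c where "c = Sup S"
  have keyineq: "snd p - norm (fst p - z) \<le> norm (fst q + z) - snd q" if "p \<in> G" "q \<in> G" for p q
  proof -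
    have "snd p + snd q \<le> norm (fst p + fst q)" using Gdom[OF Gadd[OF that]] by simp
    also have "\<dots> = norm ((fst p - z) + (fst q + z))" by simp
    also have "\<dots> \<le> norm (fst p - z) + norm (fst q + z)" by (rule norm_triangle_ineq)
    finally show ?thesis by simp
  qed
  have Sne: "S \<noteq> {}" using G00 S_def by auto
  have Sbdd: "bdd_above S" unfolding S_def
    using keyineq[OF _ G00] by (intro bdd_aboveI2) auto
  have c_ge: "snd p - norm (fst p - z) \<le> c" if "p \<in> G" for p
    unfolding c_def using that Sbdd S_def by (auto intro: cSup_upper)
  have c_le: "c \<le> norm (fst q + z) - snd q" if "q \<in> G" for q
    unfolding c_def using Sne keyineq[OF _ that] S_def by (auto intro!: cSup_least)
  define G' where "G' = {(fst p + r *\<^sub>R z, snd p + r * c) | p r. p \<in> G}"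
  have GG': "G \<subseteq> G'"
  proof
    fix q assume "q \<in> G"
    moreover have "q = (fst q + 0 *\<^sub>R z, snd q + 0 * c)" by simp
    ultimately show "q \<in> G'" unfolding G'_def by blast
  qed
  have "(z, c) = (fst (0::'a, 0::real) + 1 *\<^sub>R z, snd (0::'a, 0::real) + 1 * c)" by simp
  then have zG': "(z, c) \<in> G'" unfolding G'_def using G00 by blast
  have "(z, c) \<notin> G" using z by force
  then have neq: "G' \<noteq> G" using zG' by blast
  have G'I: "(fst p + r *\<^sub>R z, snd p + r * c) \<in> G'" if "p \<in> G" for p r
    unfolding G'_def using that by blast
  have diffG: "(fst p - fst q, snd p - snd q) \<in> G" if "p \<in> G" "q \<in> G" for p q
    using Gadd[OF that(1) Gsc[OF that(2), of "-1"]] by simp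
  have "hb_good G0 G'" unfolding hb_good_def
  proof (intro conjI ballI allI impI)
    show "G0 \<subseteq> G'" using G0G GG' by blast
  next
    fix a b assume "a \<in> G'" "b \<in> G'"
    then obtain p r q s where p: "p \<in> G" "a = (fst p + r *\<^sub>R z, snd p + r * c)"
      and q: "q \<in> G" "b = (fst q + s *\<^sub>R z, snd q + s * c)" unfolding G'_def by blast
    have "(fst a + fst b, snd a + snd b) = (fst (fst p + fst q, snd p + snd q) + (r + s) *\<^sub>R z,
       snd (fst p + fst q, snd p + snd q) + (r + s) * c)" using p q by (simp add: algebra_simps)
    then show "(fst a + fst b, snd a + snd b) \<in> G'" using G'I[OF Gadd[OF p(1) q(1)]] by simp
  next
    fix a t assume "a \<in> G'"
    then obtain p r where p: "p \<in> G" "a = (fst p + r *\<^sub>R z, snd p + r * c)" unfolding G'_def by blast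
    have "(t *\<^sub>R fst a, t * snd a) = (fst (t *\<^sub>R fst p, t * snd p) + (t * r) *\<^sub>R z,
       snd (t *\<^sub>R fst p, t * snd p) + (t * r) * c)" using p by (simp add: algebra_simps)
    then show "(t *\<^sub>R fst a, t * snd a) \<in> G'" using G'I[OF Gsc[OF p(1)]] by simp
  next
    fix a b assume "a \<in> G'" "b \<in> G'" and eq: "fst a = fst b"
    then obtain p r q s where p: "p \<in> G" "a = (fst p + r *\<^sub>R z, snd p + r * c)"
      and q: "q \<in> G" "b = (fst q + s *\<^sub>R z, snd q + s * c)" unfolding G'_def by blast
    have e: "fst p - fst q = (s - r) *\<^sub>R z" using eq p q by (simp add: algebra_simps)
    have rs: "r = s"
    proof (rule ccontr)
      assume "r \<noteq> s"
      then have "z = (1 / (s - r)) *\<^sub>R (fst p - fst q)" using e by simp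
      then have "(z, (1 / (s - r)) * (snd p - snd q)) \<in> G" using Gsc[OF diffG[OF p(1) q(1)], of "1 / (s - r)"] by simp
      then show False using z by force
    qed
    then have "fst p = fst q" using e by simp
    then have "snd p = snd q" using Gfun p q by blast
    then show "snd a = snd b" using p q rs by simp
  next
    fix a assume "a \<in> G'"
    then obtain p r where p: "p \<in> G" and a: "a = (fst p + r *\<^sub>R z, snd p + r * c)" unfolding G'_def by blast
    show "snd a \<le> norm (fst a)"
    proof (cases r "0::real" rule: linorder_cases)
      case equal then show ?thesis using Gdom[OF p] a by simp
    next
      case greater
      have "c \<le> norm ((1/r) *\<^sub>R fst p + z) - (1/r) * snd p" using c_le[OF Gsc[OF p, of "1/r"]] by simp
      then have "r * c \<le> r * (norm ((1/r) *\<^sub>R fst p + z) - (1/r) * snd p)"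
        using greater by (intro mult_left_mono) auto
      also have "\<dots> = r * norm ((1/r) *\<^sub>R fst p + z) - snd p"
        using greater by (simp add: right_diff_distrib)
      finally have "r * c \<le> r * norm ((1/r) *\<^sub>R fst p + z) - snd p" .
      also have "r * norm ((1/r) *\<^sub>R fst p + z) = norm (fst p + r *\<^sub>R z)"
      proof -
        have "r *\<^sub>R ((1/r) *\<^sub>R fst p + z) = fst p + r *\<^sub>R z" using greater by (simp add: algebra_simps)
        then show ?thesis using greater by (metis abs_of_pos norm_scaleR)
      qed
      finally show ?thesis using a by simp
    next
      case less
      define m where "m = - r"
      have m: "0 < m" using less m_def by simp
      have "(1/m) * snd p - norm ((1/m) *\<^sub>R fst p - z) \<le> c" using c_ge[OF Gsc[OF p, of "1/m"]] by simp
      then have "m * ((1/m) * snd p - norm ((1/m) *\<^sub>R fst p - z)) \<le> m * c" using m by (simp add: mult_left_mono)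
      then have "snd p - m * norm ((1/m) *\<^sub>R fst p - z) \<le> m * c" using m by (simp add: algebra_simps)
      also have "m * norm ((1/m) *\<^sub>R fst p - z) = norm (fst p + r *\<^sub>R z)"
      proof -
        have "m *\<^sub>R ((1/m) *\<^sub>R fst p - z) = fst p + r *\<^sub>R z" using m by (simp add: algebra_simps m_def)
        then show ?thesis using m by (metis abs_of_pos norm_scaleR)
      qed
      finally show ?thesis using a m_def by simp
    qed
  qed
  then show ?thesis using GG' neq by blast
qed


lemma hb_sep:
  fixes M :: "'a::real_normed_vector set"
  assumes clM: "closed M" and M0: "0 \<in> M" and Madd: "\<And>x y. x \<in> M \<Longrightarrow> y \<in> M \<Longrightarrow> x + y \<in> M"
    and Msc: "\<And>r x. x \<in> M \<Longrightarrow> r *\<^sub>R x \<in> M" and y: "y \<notin> M"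
  shows "\<exists>f. linear f \<and> (\<forall>x. \<bar>f x\<bar> \<le> norm x) \<and> (\<forall>x\<in>M. f x = 0) \<and> f y \<noteq> 0"
proof -
  define d where "d = infdist y M"
  have dpos: "0 < d" unfolding d_def using infdist_pos_not_in_closed[OF clM _ y] M0 by auto
  define G0 where "G0 = {(m + r *\<^sub>R y, r * d) | m r. m \<in> M}"
  have G0I: "(m + r *\<^sub>R y, r * d) \<in> G0" if "m \<in> M" for m r using that G0_def by blast
  have good0: "hb_good G0 G0" unfolding hb_good_def
  proof (intro conjI ballI allI impI)
    show "G0 \<subseteq> G0" by simp
  next
    fix a b assume "a \<in> G0" "b \<in> G0"
    then obtain m r m' r' where a: "m \<in> M" "a = (m + r *\<^sub>R y, r * d)" and b: "m' \<in> M" "b = (m' + r' *\<^sub>R y, r' * d)"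
      unfolding G0_def by blast
    have "(fst a + fst b, snd a + snd b) = ((m + m') + (r + r') *\<^sub>R y, (r + r') * d)"
      using a b by (simp add: algebra_simps)
    then show "(fst a + fst b, snd a + snd b) \<in> G0" using G0I[OF Madd[OF a(1) b(1)]] by simp
  next
    fix a t assume "a \<in> G0"
    then obtain m r where a: "m \<in> M" "a = (m + r *\<^sub>R y, r * d)" unfolding G0_def by blast
    have eqn: "(t *\<^sub>R fst a, t * snd a) = (t *\<^sub>R m + (t * r) *\<^sub>R y, (t * r) * d)"
      using a by (simp add: algebra_simps)
    show "(t *\<^sub>R fst a, t * snd a) \<in> G0" unfolding eqn by (rule G0I[OF Msc[OF a(1)]])
  next
    fix a b assume "a \<in> G0" "b \<in> G0" and eq: "fst a = fst b"
    then obtain m r m' r' where a: "m \<in> M" "a = (m + r *\<^sub>R y, r * d)" and b: "m' \<in> M" "b = (m' + r' *\<^sub>R y, r' * d)"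
      unfolding G0_def by blast
    have e: "m - m' = (r' - r) *\<^sub>R y" using eq a b by (simp add: algebra_simps)
    have "r = r'"
    proof (rule ccontr)
      assume "r \<noteq> r'"
      then have "y = (1 / (r' - r)) *\<^sub>R (m + (-1) *\<^sub>R m')" using e by simp
      then have "y \<in> M" using Msc[OF Madd[OF a(1) Msc[OF b(1)]]] by metis
      then show False using y by simp
    qed
    then show "snd a = snd b" using a b by simp
  next
    fix a assume "a \<in> G0"
    then obtain m r where a: "m \<in> M" "a = (m + r *\<^sub>R y, r * d)" unfolding G0_def by blast
    show "snd a \<le> norm (fst a)"
    proof (cases "r \<le> 0")
      case True
      then have "r * d \<le> 0" using dpos by (simp add: mult_nonpos_nonneg)
      also have "0 \<le> norm (m + r *\<^sub>R y)" by simp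
      finally show ?thesis using a by simp
    next
      case False
      then have r: "0 < r" by simp
      have mM: "(- (1/r)) *\<^sub>R m \<in> M" using Msc[OF a(1)] .
      have "d \<le> dist y ((- (1/r)) *\<^sub>R m)" unfolding d_def by (rule infdist_le[OF mM])
      also have "\<dots> = norm ((1/r) *\<^sub>R (m + r *\<^sub>R y))" using r by (simp add: dist_norm algebra_simps)
      also have "\<dots> = norm (m + r *\<^sub>R y) / r" using r by simp
      finally have "r * d \<le> norm (m + r *\<^sub>R y)" using r by (simp add: field_simps)
      then show ?thesis using a by simp
    qed
  qed
  define A where "A = {G. hb_good G0 G}"
  have "\<exists>Gm\<in>A. \<forall>X\<in>A. Gm \<subseteq> X \<longrightarrow> X = Gm"
  proof (rule Zorn_Lemma2, intro ballI)
    fix C assume C: "C \<in> chains A"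
    show "\<exists>U\<in>A. \<forall>X\<in>C. X \<subseteq> U"
    proof (cases "C = {}")
      case True then show ?thesis using good0 A_def by blast
    next
      case False
      have CA: "\<And>X. X \<in> C \<Longrightarrow> hb_good G0 X" using C unfolding chains_def A_def by blast
      have ch: "\<And>X Y. X \<in> C \<Longrightarrow> Y \<in> C \<Longrightarrow> X \<subseteq> Y \<or> Y \<subseteq> X"
        using C unfolding chains_def chain_subset_def by blast
      have two: "\<exists>X\<in>C. p \<in> X \<and> q \<in> X" if pq: "p \<in> \<Union>C" "q \<in> \<Union>C" for p q
      proof -
        obtain X Y where "X \<in> C" "Y \<in> C" "p \<in> X" "q \<in> Y" using pq by blast
        then show ?thesis using ch[of X Y] by blast
      qed
      have "hb_good G0 (\<Union>C)" unfolding hb_good_def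
      proof (intro conjI ballI allI impI)
        obtain X where "X \<in> C" using False by blast
        then show "G0 \<subseteq> \<Union>C" using CA[of X] unfolding hb_good_def by blast
      next
        fix p q assume "p \<in> \<Union>C" "q \<in> \<Union>C"
        then obtain X where "X \<in> C" "p \<in> X" "q \<in> X" using two by blast
        then show "(fst p + fst q, snd p + snd q) \<in> \<Union>C" using CA[of X] unfolding hb_good_def by blast
      next
        fix p r assume "p \<in> \<Union>C"
        then obtain X where "X \<in> C" "p \<in> X" by blast
        then show "(r *\<^sub>R fst p, r * snd p) \<in> \<Union>C" using CA[of X] unfolding hb_good_def by blast
      next
        fix p q assume "p \<in> \<Union>C" "q \<in> \<Union>C" "fst p = fst q"
        then obtain X where "X \<in> C" "p \<in> X" "q \<in> X" using two by blast
        then show "snd p = snd q" using CA[of X] \<open>fst p = fst q\<close> unfolding hb_good_def by blast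
      next
        fix p assume "p \<in> \<Union>C"
        then obtain X where "X \<in> C" "p \<in> X" by blast
        then show "snd p \<le> norm (fst p)" using CA[of X] unfolding hb_good_def by blast
      qed
      then show ?thesis using A_def by blast
    qed
  qed
  then obtain Gm where GmA: "hb_good G0 Gm" and max: "\<And>X. hb_good G0 X \<Longrightarrow> Gm \<subseteq> X \<Longrightarrow> X = Gm"
    unfolding A_def by blast
  have G0Gm: "G0 \<subseteq> Gm" using GmA unfolding hb_good_def by blast
  have zero: "(0, 0) \<in> Gm" using G0I[OF M0, of 0] G0Gm by auto
  have total: "x \<in> fst ` Gm" for x
  proof (rule ccontr)
    assume "x \<notin> fst ` Gm"
    then obtain G' where "hb_good G0 G'" "Gm \<subseteq> G'" "G' \<noteq> Gm" using hb_extend[OF GmA _ zero] by blast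
    then show False using max by blast
  qed
  have Gadd: "\<And>p q. p \<in> Gm \<Longrightarrow> q \<in> Gm \<Longrightarrow> (fst p + fst q, snd p + snd q) \<in> Gm"
    and Gsc: "\<And>p r. p \<in> Gm \<Longrightarrow> (r *\<^sub>R fst p, r * snd p) \<in> Gm"
    and Gfun: "\<And>p q. p \<in> Gm \<Longrightarrow> q \<in> Gm \<Longrightarrow> fst p = fst q \<Longrightarrow> snd p = snd q"
    and Gdom: "\<And>p. p \<in> Gm \<Longrightarrow> snd p \<le> norm (fst p)"
    using GmA unfolding hb_good_def by blast+
  define f where "f x = (THE v. (x, v) \<in> Gm)" for x
  have fG: "(x, f x) \<in> Gm" for x
  proof -
    obtain p where p: "p \<in> Gm" "x = fst p" using total[of x] by blast
    then have ex: "(x, snd p) \<in> Gm" by simp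
    have "\<And>v. (x, v) \<in> Gm \<Longrightarrow> v = snd p" using Gfun[OF _ ex] by force
    then have "f x = snd p" unfolding f_def using ex by blast
    then show ?thesis using ex by simp
  qed
  have funiq: "(x, v) \<in> Gm \<Longrightarrow> f x = v" for x v using Gfun[OF fG] by force
  have lin: "linear f"
  proof (rule linearI)
    fix a b show "f (a + b) = f a + f b" using funiq Gadd[OF fG[of a] fG[of b]] by simp
  next
    fix r a show "f (r *\<^sub>R a) = r *\<^sub>R f a" using funiq Gsc[OF fG[of a], of r] by simp
  qed
  have bnd: "\<bar>f x\<bar> \<le> norm x" for x
  proof -
    have "f x \<le> norm x" using Gdom[OF fG[of x]] by simp
    moreover have "f (-x) \<le> norm x" using Gdom[OF fG[of "-x"]] by simp
    moreover have "f (-x) = - f x" using linear_neg[OF lin] by simp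
    ultimately show ?thesis by simp
  qed
  have fM: "f m = 0" if "m \<in> M" for m using funiq G0I[OF that, of 0] G0Gm by auto
  have fy: "f y = d" using funiq G0I[OF M0, of 1] G0Gm by auto
  show ?thesis using lin bnd fM fy dpos by (intro exI[of _ f]) auto
qed



lemma norm_op_pow: "norm (op_pow S n) \<le> norm S ^ n"
proof (induction n)
  case 0 then show ?case using norm_blinfun_id_le by simp
next
  case (Suc n)
  have "norm (op_pow S (Suc n)) \<le> norm S * norm (op_pow S n)" by (simp add: norm_blinfun_compose)
  also have "\<dots> \<le> norm S * norm S ^ n" using Suc by (simp add: mult_left_mono)
  finally show ?case by simp
qed

lemma op_exp_est:
  fixes S :: "'a::banach \<Rightarrow>\<^sub>L 'a"
  shows "\<exists>R. op_exp S = id_blinfun + S + R \<and> norm R \<le> norm S ^ 2 * exp (norm S)"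
proof -
  define f where "f n = (1 / fact n) *\<^sub>R op_pow S n" for n
  have nf: "norm (f n) \<le> norm S ^ n / fact n" for n
    using norm_op_pow[of S n] by (simp add: f_def divide_right_mono)
  have sg: "summable (\<lambda>n. norm S ^ n / fact n)"
    using summable_exp[of "norm S"] by (simp add: field_simps)
  have sf: "summable f" by (rule summable_comparison_test'[OF sg nf])
  have sg2: "summable (\<lambda>n. norm S ^ (n + 2) / fact (n + 2))"
    using sg by (subst summable_iff_shift) 
  have snf2: "summable (\<lambda>n. norm (f (n + 2)))"
    by (rule summable_comparison_test'[OF sg2]) (use nf[of "_ + 2"] in \<open>simp only: norm_ge_zero abs_of_nonneg real_norm_def\<close>)
  define R where "R = (\<Sum>n. f (n + 2))"
  have "op_exp S = suminf f" unfolding op_exp_def f_def by (rule refl)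
  also have "\<dots> = R + (\<Sum>i<2. f i)" unfolding R_def by (rule suminf_split_initial_segment[OF sf])
  also have "(\<Sum>i<2. f i) = id_blinfun + S"
    by (simp add: f_def numeral_2_eq_2 lessThan_Suc blinfun_eqI)
  finally have e: "op_exp S = id_blinfun + S + R" by (simp add: algebra_simps)
  have "norm R \<le> (\<Sum>n. norm (f (n + 2)))" unfolding R_def by (rule summable_norm[OF snf2])
  also have "\<dots> \<le> (\<Sum>n. norm S ^ 2 * (norm S ^ n / fact n))"
  proof (rule suminf_le)
    show "summable (\<lambda>n. norm S ^ 2 * (norm S ^ n / fact n))" using sg by (rule summable_mult)
    show "summable (\<lambda>n. norm (f (n + 2)))" by (rule snf2)
    fix n
    have "norm (f (n + 2)) \<le> norm S ^ (n + 2) / fact (n + 2)" by (rule nf)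
    also have "\<dots> \<le> norm S ^ (n + 2) / fact n"
    proof (rule divide_left_mono)
      show "fact n \<le> (fact (n + 2) :: real)" by (rule fact_mono) simp
    qed auto
    also have "\<dots> = norm S ^ 2 * (norm S ^ n / fact n)" by (simp add: power_add mult.commute power2_eq_square)
    finally show "norm (f (n + 2)) \<le> norm S ^ 2 * (norm S ^ n / fact n)" .
  qed
  also have "\<dots> = norm S ^ 2 * exp (norm S)"
  proof -
    have "(\<lambda>n. norm S ^ n /\<^sub>R fact n) sums exp (norm S)" by (rule exp_converges)
    then have s1: "(\<lambda>n. norm S ^ n / fact n) sums exp (norm S)" by (simp add: divide_inverse mult.commute)
    have "(\<lambda>n. norm S ^ 2 * (norm S ^ n / fact n)) sums (norm S ^ 2 * exp (norm S))" by (rule sums_mult[OF s1])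
    then show ?thesis by (rule sums_unique[symmetric])
  qed
  finally show ?thesis using e by blast
qed


definition diss_op :: "('a::real_normed_vector \<Rightarrow> 'a) \<Rightarrow> bool" where
  "diss_op D \<longleftrightarrow> (\<exists>C t0. 0 \<le> C \<and> 0 < t0 \<and>
     (\<forall>t x. \<bar>t\<bar> \<le> t0 \<longrightarrow> norm (x + t *\<^sub>R D x) \<le> (1 + C * t^2) * norm x))"

lemma diss_exp:
  fixes A :: "'a::banach \<Rightarrow>\<^sub>L 'a"
  assumes iso: "\<And>t x. norm (blinfun_apply (op_exp (t *\<^sub>R A)) x) = norm x"
  shows "diss_op (blinfun_apply A)"
  unfolding diss_op_def
proof (intro exI conjI allI impI)
  show "0 \<le> norm A ^ 2 * exp (norm A)" by simp
  show "(0::real) < 1" by simp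
  fix t :: real and x assume t: "\<bar>t\<bar> \<le> 1"
  obtain R where R: "op_exp (t *\<^sub>R A) = id_blinfun + t *\<^sub>R A + R"
    and nR: "norm R \<le> norm (t *\<^sub>R A) ^ 2 * exp (norm (t *\<^sub>R A))"
    using op_exp_est by blast
  have "x + t *\<^sub>R A x = blinfun_apply (op_exp (t *\<^sub>R A)) x - R x"
    unfolding R by (simp add: blinfun.add_left blinfun.scaleR_left)
  then have "norm (x + t *\<^sub>R A x) \<le> norm x + norm (R x)"
    using iso[of t x] norm_triangle_ineq4 by metis
  also have "norm (R x) \<le> norm R * norm x" by (rule norm_blinfun)
  also have "norm R \<le> (norm A ^ 2 * exp (norm A)) * t ^ 2"
  proof -
    have "norm (t *\<^sub>R A) ^ 2 = t ^ 2 * norm A ^ 2" by (simp add: power_mult_distrib)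
    moreover have "exp (norm (t *\<^sub>R A)) \<le> exp (norm A)"
      using t by (simp add: mult_left_le_one_le)
    ultimately have "norm (t *\<^sub>R A) ^ 2 * exp (norm (t *\<^sub>R A)) \<le> t ^ 2 * norm A ^ 2 * exp (norm A)"
      by (simp add: mult_left_mono)
    then show ?thesis using nR by (simp add: ac_simps)
  qed
  finally show "norm (x + t *\<^sub>R A x) \<le> (1 + norm A ^ 2 * exp (norm A) * t ^ 2) * norm x"
    by (simp add: algebra_simps mult_right_mono)
qed

lemma diss_neg: "diss_op D \<Longrightarrow> diss_op (\<lambda>x. - D x)"
  unfolding diss_op_def
proof (elim exE conjE, intro exI conjI allI impI)
  fix C t0 :: real assume C: "0 \<le> C" "0 < t0"
    and H: "\<forall>t x. \<bar>t\<bar> \<le> t0 \<longrightarrow> norm (x + t *\<^sub>R D x) \<le> (1 + C * t\<^sup>2) * norm x"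
  show "0 \<le> C" "0 < t0" by (rule C)+
  fix t x assume "\<bar>t\<bar> \<le> t0"
  then show "norm (x + t *\<^sub>R - D x) \<le> (1 + C * t\<^sup>2) * norm x" using H[rule_format, of "-t" x] by simp
qed

lemma diss_sum3:
  assumes "diss_op A" "diss_op B" "diss_op D"
  shows "diss_op (\<lambda>x. A x + B x + D x)"
proof -
  obtain C1 s1 where C1: "0 \<le> C1" "0 < s1" "\<And>t x. \<bar>t\<bar> \<le> s1 \<Longrightarrow> norm (x + t *\<^sub>R A x) \<le> (1 + C1 * t^2) * norm x"
    using assms(1) unfolding diss_op_def by blast
  obtain C2 s2 where C2: "0 \<le> C2" "0 < s2" "\<And>t x. \<bar>t\<bar> \<le> s2 \<Longrightarrow> norm (x + t *\<^sub>R B x) \<le> (1 + C2 * t^2) * norm x"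
    using assms(2) unfolding diss_op_def by blast
  obtain C3 s3 where C3: "0 \<le> C3" "0 < s3" "\<And>t x. \<bar>t\<bar> \<le> s3 \<Longrightarrow> norm (x + t *\<^sub>R D x) \<le> (1 + C3 * t^2) * norm x"
    using assms(3) unfolding diss_op_def by blast
  show ?thesis unfolding diss_op_def
  proof (intro exI conjI allI impI)
    show "0 \<le> 3 * (C1 + C2 + C3)" using C1 C2 C3 by simp
    show "0 < min s1 (min s2 s3) / 3" using C1 C2 C3 by simp
    fix t x assume t: "\<bar>t\<bar> \<le> min s1 (min s2 s3) / 3"
    have t3: "\<bar>3 * t\<bar> \<le> s1" "\<bar>3 * t\<bar> \<le> s2" "\<bar>3 * t\<bar> \<le> s3" using t by auto
    have "x + t *\<^sub>R (A x + B x + D x) = (1/3) *\<^sub>R ((x + (3 * t) *\<^sub>R A x) + (x + (3 * t) *\<^sub>R B x) + (x + (3 * t) *\<^sub>R D x))"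
      by (simp add: algebra_simps) (simp flip: scaleR_add_left)
    then have "norm (x + t *\<^sub>R (A x + B x + D x)) \<le> (1/3) * (norm (x + (3 * t) *\<^sub>R A x) + norm (x + (3 * t) *\<^sub>R B x) + norm (x + (3 * t) *\<^sub>R D x))"
    proof -
      let ?a = "x + (3 * t) *\<^sub>R A x" and ?b = "x + (3 * t) *\<^sub>R B x" and ?c = "x + (3 * t) *\<^sub>R D x"
      have "norm (?a + ?b + ?c) \<le> norm ?a + norm ?b + norm ?c"
        by (meson add_mono norm_triangle_ineq order_refl order_trans)
      moreover have "norm ((1/3) *\<^sub>R (?a + ?b + ?c)) = (1/3) * norm (?a + ?b + ?c)" by simp
      ultimately show ?thesis using \<open>x + t *\<^sub>R (A x + B x + D x) = _\<close> by simp
    qed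
    also have "\<dots> \<le> (1/3) * ((1 + C1 * (3*t)^2) * norm x + (1 + C2 * (3*t)^2) * norm x + (1 + C3 * (3*t)^2) * norm x)"
      using C1(3)[OF t3(1), of x] C2(3)[OF t3(2), of x] C3(3)[OF t3(3), of x] by (intro mult_left_mono add_mono) auto
    also have "\<dots> = (1 + 3 * (C1 + C2 + C3) * t^2) * norm x" by (simp add: algebra_simps power2_eq_square)
    finally show "norm (x + t *\<^sub>R (A x + B x + D x)) \<le> (1 + 3 * (C1 + C2 + C3) * t^2) * norm x" .
  qed
qed



lemma cJB_facts:
  assumes "complex_JB_triple J T"
  shows cJB_linJ: "linear J" and cJB_JJ: "\<And>x. J (J x) = - x"
    and cJB_normJ: "\<And>x. norm (J x) = norm x"
    and cJB_l1: "\<And>y z. linear (\<lambda>x. T x y z)" and cJB_l2: "\<And>x z. linear (\<lambda>y. T x y z)"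
    and cJB_l3: "\<And>x y. linear (\<lambda>z. T x y z)"
    and cJB_J1: "\<And>x y z. T (J x) y z = J (T x y z)" and cJB_J2: "\<And>x y z. T x (J y) z = - J (T x y z)"
    and cJB_sym: "\<And>x y z. T x y z = T z y x"
    and cJB_herm: "\<And>a. hermitian J (Blinfun (T a a))"
    and cJB_bd: "\<exists>K. \<forall>x y z. norm (T x y z) \<le> K * norm x * norm y * norm z"
proof -
  have cs: "complex_structure J" using assms unfolding complex_JB_triple_def by blast
  show "linear J" using cs unfolding complex_structure_def by blast
  show "\<And>x. J (J x) = - x" using cs unfolding complex_structure_def by blast
  show "\<And>x. norm (J x) = norm x"
  proof -
    fix x
    have "norm (cscale J \<i> x) = cmod \<i> * norm x" using cs unfolding complex_structure_def by blast
    then show "norm (J x) = norm x" by (simp add: cscale_def)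
  qed
  have H: "(\<forall>y z. linear (\<lambda>x. T x y z)) \<and> (\<forall>x z. linear (\<lambda>y. T x y z)) \<and>
     (\<forall>x y. linear (\<lambda>z. T x y z)) \<and>
     (\<forall>x y z. T (J x) y z = J (T x y z)) \<and>
     (\<forall>x y z. T x (J y) z = - J (T x y z)) \<and>
     (\<forall>x y z. T x y z = T z y x) \<and>
     (\<exists>K. \<forall>x y z. norm (T x y z) \<le> K * norm x * norm y * norm z) \<and>
     (\<forall>a. hermitian J (Blinfun (T a a)))"
    using assms unfolding complex_JB_triple_def by auto
  show "\<And>y z. linear (\<lambda>x. T x y z)" using H by blast
  show "\<And>x z. linear (\<lambda>y. T x y z)" using H by blast
  show "\<And>x y. linear (\<lambda>z. T x y z)" using H by blast
  show "\<And>x y z. T (J x) y z = J (T x y z)" using H by blast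
  show "\<And>x y z. T x (J y) z = - J (T x y z)" using H by blast
  show "\<And>x y z. T x y z = T z y x" using H by blast
  show "\<And>a. hermitian J (Blinfun (T a a))" using H by blast
  show "\<exists>K. \<forall>x y z. norm (T x y z) \<le> K * norm x * norm y * norm z" using H by blast
qed

lemma cJB_J3:
  assumes "complex_JB_triple J T"
  shows "T x y (J z) = J (T x y z)"
  using cJB_sym[OF assms] cJB_J1[OF assms] by metis

lemma cJB_bl:
  assumes "complex_JB_triple J T"
  shows "bounded_linear (T a b)"
proof -
  obtain K where K: "\<forall>x y z. norm (T x y z) \<le> K * norm x * norm y * norm z" using cJB_bd[OF assms] by blast
  have l: "linear (T a b)" using cJB_l3[OF assms, of a b] by simp
  show ?thesis
  proof (rule bounded_linear_intro)
    show "T a b (x + y) = T a b x + T a b y" for x y using linear_add[OF l] .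
    show "T a b (r *\<^sub>R x) = r *\<^sub>R T a b x" for r x using linear_scale[OF l] .
    show "norm (T a b x) \<le> norm x * (K * norm a * norm b)" for x using K by (simp add: ac_simps)
  qed
qed

lemma cJB_blJ:
  assumes "complex_JB_triple J T"
  shows "bounded_linear J"
proof (rule bounded_linear_intro)
  have l: "linear J" by (rule cJB_linJ[OF assms])
  show "J (x + y) = J x + J y" for x y using linear_add[OF l] .
  show "J (r *\<^sub>R x) = r *\<^sub>R J x" for r x using linear_scale[OF l] .
  show "norm (J x) \<le> norm x * 1" for x using cJB_normJ[OF assms] by simp
qed

lemma cJB_diss_herm:
  assumes "complex_JB_triple J T"
  shows "diss_op (\<lambda>x. J (T w w x))"
proof -
  have h: "hermitian J (Blinfun (T w w))" by (rule cJB_herm[OF assms])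
  then have "\<And>t x. norm (blinfun_apply (op_exp (t *\<^sub>R (Blinfun J o\<^sub>L Blinfun (T w w)))) x) = norm x"
    unfolding hermitian_def by blast
  then have "diss_op (blinfun_apply (Blinfun J o\<^sub>L Blinfun (T w w)))" by (rule diss_exp)
  moreover have "blinfun_apply (Blinfun J o\<^sub>L Blinfun (T w w)) = (\<lambda>x. J (T w w x))"
    using bounded_linear_Blinfun_apply[OF cJB_bl[OF assms]] bounded_linear_Blinfun_apply[OF cJB_blJ[OF assms]]
    by (simp add: fun_eq_iff)
  ultimately show ?thesis by simp
qed

lemma cJB_delta_decomp:
  assumes A: "complex_JB_triple J T"
  shows "delta T a b x = J (T (a + J b) (a + J b) x) + - J (T a a x) + - J (T b b x)"
proof -
  have lJ: "linear J" by (rule cJB_linJ[OF A])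
  have l1: "\<And>y z. linear (\<lambda>x. T x y z)" and l2: "\<And>x z. linear (\<lambda>y. T x y z)" using cJB_l1[OF A] cJB_l2[OF A] by blast+
  have "T (a + J b) (a + J b) x = T a (a + J b) x + T (J b) (a + J b) x" using linear_add[OF l1] by blast
  also have "T a (a + J b) x = T a a x + T a (J b) x" using linear_add[OF l2] by blast
  also have "T (J b) (a + J b) x = J (T b a x + T b (J b) x)"
    using cJB_J1[OF A] linear_add[OF l2] by metis
  also have "T a (J b) x = - J (T a b x)" by (rule cJB_J2[OF A])
  also have "T b (J b) x = - J (T b b x)" by (rule cJB_J2[OF A])
  finally have S: "T (a + J b) (a + J b) x = T a a x - J (T a b x) + J (T b a x) + T b b x"
    using linear_add[OF lJ] linear_neg[OF lJ] linear_diff[OF lJ] cJB_JJ[OF A] by (simp add: algebra_simps)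
  have "J (T (a + J b) (a + J b) x) = J (T a a x) - J (J (T a b x)) + J (J (T b a x)) + J (T b b x)"
    unfolding S using linear_add[OF lJ] linear_diff[OF lJ] by simp
  also have "\<dots> = J (T a a x) + T a b x - T b a x + J (T b b x)" using cJB_JJ[OF A] by simp
  finally show ?thesis unfolding delta_def by (simp add: algebra_simps)
qed

lemma cJB_diss_delta:
  assumes A: "complex_JB_triple J T"
  shows "diss_op (delta T a b)"
proof -
  have "diss_op (\<lambda>x. J (T (a + J b) (a + J b) x) + - J (T a a x) + - J (T b b x))"
    by (intro diss_sum3 diss_neg cJB_diss_herm[OF A])
  moreover have "delta T a b = (\<lambda>x. J (T (a + J b) (a + J b) x) + - J (T a a x) + - J (T b b x))"
    using cJB_delta_decomp[OF A] by (simp add: fun_eq_iff)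
  ultimately show ?thesis by simp
qed



lemma dual_norm_least1:
  fixes \<phi> :: "'a::real_normed_vector \<Rightarrow> 'k::real_normed_field"
  assumes "0 \<in> E" "\<And>x. x \<in> E \<Longrightarrow> norm x \<le> 1 \<Longrightarrow> norm (\<phi> x) \<le> B"
  shows "dual_norm E \<phi> \<le> B"
  unfolding dual_norm_def using assms by (intro cSUP_least) auto

lemma msummand_mideal:
  fixes W :: "'a::real_normed_vector set"
  assumes clW: "closed W" and sW: "subspace W" and MP: "M_projection W P" and MPW: "M = P ` W"
  shows "M_ideal (scaleR :: real \<Rightarrow> 'a \<Rightarrow> 'a) W M"
proof -
  have PW: "\<And>x. x \<in> W \<Longrightarrow> P x \<in> W" and PP: "\<And>x. x \<in> W \<Longrightarrow> P (P x) = P x"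
    and Pn: "\<And>x. x \<in> W \<Longrightarrow> norm x = max (norm (P x)) (norm (x - P x))"
    and Padd: "\<And>x y. x \<in> W \<Longrightarrow> y \<in> W \<Longrightarrow> P (x + y) = P x + P y"
    and Psc: "\<And>c x. x \<in> W \<Longrightarrow> P (c *\<^sub>R x) = c *\<^sub>R P x"
    using MP unfolding M_projection_def by blast+
  have W0: "0 \<in> W" using sW by (rule subspace_0)
  have Wadd: "\<And>x y. x \<in> W \<Longrightarrow> y \<in> W \<Longrightarrow> x + y \<in> W" using sW by (rule subspace_add)
  have Wsc: "\<And>c x. x \<in> W \<Longrightarrow> c *\<^sub>R x \<in> W" using sW by (rule subspace_scale)
  have Wdiff: "\<And>x y. x \<in> W \<Longrightarrow> y \<in> W \<Longrightarrow> x - y \<in> W" using sW by (rule subspace_diff)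
  have Pdiff: "\<And>x y. x \<in> W \<Longrightarrow> y \<in> W \<Longrightarrow> P (x - y) = P x - P y"
  proof -
    fix x y assume "x \<in> W" "y \<in> W"
    then have "P (x + (-1) *\<^sub>R y) = P x + (-1) *\<^sub>R P y" using Padd Psc Wsc by metis
    then show "P (x - y) = P x - P y" by simp
  qed
  have P0: "P 0 = 0" using Psc[OF W0, of 0] by simp
  have Pnorm: "\<And>x. x \<in> W \<Longrightarrow> norm (P x) \<le> norm x" using Pn by (metis max.cobounded1)
  have Pnorm2: "\<And>x. x \<in> W \<Longrightarrow> norm (x - P x) \<le> norm x" using Pn by (metis max.cobounded2)
  have PIP: "\<And>x. x \<in> W \<Longrightarrow> P (x - P x) = 0" using Pdiff PW PP by simp
  have ME: "M \<subseteq> W" using MPW PW by blast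
  have Mchar: "M = {x \<in> W. P x = x}"
  proof
    show "M \<subseteq> {x \<in> W. P x = x}" using MPW PW PP by auto
    show "{x \<in> W. P x = x} \<subseteq> M" using MPW by (auto intro: image_eqI[where x=x for x, OF sym])
  qed
  have clM: "closed M"
    unfolding closed_sequential_limits
  proof (intro allI impI, elim conjE)
    fix x l assume xM: "\<forall>n. x n \<in> M" and lim: "x \<longlonglongrightarrow> l"
    have xW: "x n \<in> W" and Px: "P (x n) = x n" for n using xM Mchar by auto
    have lW: "l \<in> W" using clW xW lim closed_sequentially by blast
    have b: "norm (P l - l) \<le> 2 * norm (x n - l)" for n
    proof -
      have "P l - l = P (l - x n) + (x n - l)" using Pdiff[OF lW xW] Px by simp
      then have "norm (P l - l) \<le> norm (P (l - x n)) + norm (x n - l)" by (metis norm_triangle_ineq)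
      also have "norm (P (l - x n)) \<le> norm (l - x n)" using Pnorm Wdiff lW xW by blast
      also have "norm (l - x n) = norm (x n - l)" by (rule norm_minus_commute)
      finally show ?thesis by simp
    qed
    have "P l = l"
    proof (rule ccontr)
      assume "P l \<noteq> l"
      then have e: "0 < norm (P l - l) / 2" by simp
      obtain n where "norm (x n - l) < norm (P l - l) / 2" using LIMSEQ_D[OF lim e] by blast
      then show False using b[of n] by simp
    qed
    then show "l \<in> M" using Mchar lW by simp
  qed
  have M0: "0 \<in> M" using MPW W0 P0 by (metis image_eqI)
  have Madd: "\<forall>x\<in>M. \<forall>y\<in>M. x + y \<in> M" using Mchar Padd Wadd by auto
  have Msc: "\<forall>c. \<forall>x\<in>M. c *\<^sub>R x \<in> M" using Mchar Psc Wsc by auto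
  define Q where "Q \<phi> = (\<lambda>v. if v \<in> W then \<phi> (v - P v) else (0::real))" for \<phi> :: "'a \<Rightarrow> real"
  define Du where "Du = dual_sp (scaleR :: real \<Rightarrow> 'a \<Rightarrow> 'a) W"
  have sm: "\<And>r y. (of_real r :: real) *\<^sub>R (y::'a) = r *\<^sub>R y" by simp
  have Nle: "\<And>\<phi> x. \<phi> \<in> Du \<Longrightarrow> x \<in> W \<Longrightarrow> norm (\<phi> x) \<le> dual_norm W \<phi> * norm x"
    unfolding Du_def using dual_norm_le[OF _ _ sm Wsc] by blast
  have Nnn: "\<And>\<phi>. \<phi> \<in> Du \<Longrightarrow> 0 \<le> dual_norm W \<phi>"
    unfolding Du_def using dual_norm_nonneg[OF _ W0] by blast
  have Dfacts: "\<And>\<phi>. \<phi> \<in> Du \<Longrightarrow> (\<forall>x\<in>W. \<forall>y\<in>W. \<phi> (x + y) = \<phi> x + \<phi> y) \<and> (\<forall>c. \<forall>x\<in>W. \<phi> (c *\<^sub>R x) = c * \<phi> x) \<and>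
      (\<exists>K. \<forall>x\<in>W. norm (\<phi> x) \<le> K * norm x) \<and> (\<forall>x. x \<notin> W \<longrightarrow> \<phi> x = 0)"
    unfolding Du_def dual_sp_def by blast
  have QD: "Q \<phi> \<in> Du" if phiD: "\<phi> \<in> Du" for \<phi>
  proof -
    obtain K where K: "\<forall>x\<in>W. norm (\<phi> x) \<le> K * norm x" using Dfacts[OF phiD] by blast
    have "norm (Q \<phi> x) \<le> \<bar>K\<bar> * norm x" if "x \<in> W" for x
    proof -
      have "norm (Q \<phi> x) \<le> K * norm (x - P x)" using K that PW Wdiff by (simp add: Q_def)
      also have "\<dots> \<le> \<bar>K\<bar> * norm (x - P x)" by (simp add: mult_right_mono)
      also have "\<dots> \<le> \<bar>K\<bar> * norm x" using Pnorm2[OF that] by (simp add: mult_left_mono)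
      finally show ?thesis .
    qed
    then have b: "\<exists>K. \<forall>x\<in>W. norm (Q \<phi> x) \<le> K * norm x" by blast
    have a: "Q \<phi> (x + y) = Q \<phi> x + Q \<phi> y" if "x \<in> W" "y \<in> W" for x y
    proof -
      have e: "x + y - P (x + y) = (x - P x) + (y - P y)" using Padd that by simp
      have "Q \<phi> (x + y) = \<phi> (x + y - P (x + y))" using that Wadd by (simp add: Q_def)
      also have "\<dots> = \<phi> ((x - P x) + (y - P y))" by (simp only: e)
      also have "\<dots> = \<phi> (x - P x) + \<phi> (y - P y)" using Dfacts[OF phiD] Wdiff PW that by blast
      also have "\<dots> = Q \<phi> x + Q \<phi> y" using that by (simp add: Q_def)
      finally show ?thesis .
    qed
    have s: "Q \<phi> (c *\<^sub>R x) = c * Q \<phi> x" if "x \<in> W" for c x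
    proof -
      have e: "c *\<^sub>R x - P (c *\<^sub>R x) = c *\<^sub>R (x - P x)" using Psc that by (simp add: algebra_simps)
      have "Q \<phi> (c *\<^sub>R x) = \<phi> (c *\<^sub>R x - P (c *\<^sub>R x))" using that Wsc by (simp add: Q_def)
      also have "\<dots> = \<phi> (c *\<^sub>R (x - P x))" by (simp only: e)
      also have "\<dots> = c * \<phi> (x - P x)" using Dfacts[OF phiD] Wdiff PW that by blast
      also have "\<dots> = c * Q \<phi> x" using that by (simp add: Q_def)
      finally show ?thesis .
    qed
    show ?thesis unfolding Du_def dual_sp_def using a s b by (auto simp: Q_def)
  qed
  have QQ: "Q (Q \<phi>) = Q \<phi>" for \<phi>
  proof
    fix v show "Q (Q \<phi>) v = Q \<phi> v"
      using PIP[of v] Wdiff PW by (auto simp: Q_def)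
  qed
  have QminD: "(\<lambda>v. \<phi> v - Q \<phi> v) = (\<lambda>v. if v \<in> W then \<phi> (P v) else 0)" if "\<phi> \<in> Du" for \<phi>
  proof
    fix v show "\<phi> v - Q \<phi> v = (if v \<in> W then \<phi> (P v) else 0)"
    proof (cases "v \<in> W")
      case True
      have "\<phi> v = \<phi> (P v + (v - P v))" by simp
      also have "\<dots> = \<phi> (P v) + \<phi> (v - P v)" using Dfacts[OF that] PW True Wdiff by blast
      finally show ?thesis using True by (simp add: Q_def)
    next
      case False then show ?thesis using Dfacts[OF that] by (simp add: Q_def)
    qed
  qed
  have Qsplit: "dual_norm W \<phi> = dual_norm W (Q \<phi>) + dual_norm W (\<lambda>x. \<phi> x - Q \<phi> x)" if phi: "\<phi> \<in> Du" for \<phi>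
  proof -
    let ?R = "\<lambda>x. \<phi> x - Q \<phi> x"
    have RD: "?R \<in> Du" using dual_diff[of \<phi> scaleR W "Q \<phi>"] phi QD[OF phi] Du_def by blast
    have le1: "dual_norm W \<phi> \<le> dual_norm W (Q \<phi>) + dual_norm W ?R"
    proof (rule dual_norm_least[OF W0])
      show "0 \<le> dual_norm W (Q \<phi>) + dual_norm W ?R" using Nnn QD[OF phi] RD by simp
      fix x assume x: "x \<in> W"
      have "norm (\<phi> x) \<le> norm (Q \<phi> x) + norm (?R x)" by (metis add.commute diff_add_cancel norm_triangle_ineq)
      also have "\<dots> \<le> dual_norm W (Q \<phi>) * norm x + dual_norm W ?R * norm x"
        using Nle[OF QD[OF phi] x] Nle[OF RD x] by (rule add_mono)
      finally show "norm (\<phi> x) \<le> (dual_norm W (Q \<phi>) + dual_norm W ?R) * norm x" by (simp add: distrib_right)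
    qed
    have pair: "norm (Q \<phi> v) + norm (?R w) \<le> dual_norm W \<phi>"
      if v: "v \<in> W" "norm v \<le> 1" and w: "w \<in> W" "norm w \<le> 1" for v w
    proof -
      define s1 where "s1 = (if 0 \<le> \<phi> (P w) then 1 else -1::real)"
      define s2 where "s2 = (if 0 \<le> \<phi> (v - P v) then 1 else -1::real)"
      define z where "z = s1 *\<^sub>R P w + s2 *\<^sub>R (v - P v)"
      have a1: "s1 *\<^sub>R P w \<in> W" "s2 *\<^sub>R (v - P v) \<in> W" using PW Wsc Wdiff v w by auto
      have zW: "z \<in> W" using a1 Wadd z_def by simp
      have Pz: "P z = s1 *\<^sub>R P w"
        using Padd[OF a1] Psc[OF PW[OF w(1)], of s1] Psc[OF Wdiff[OF v(1) PW[OF v(1)]], of s2] PIP[OF v(1)] PP[OF w(1)]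
        by (simp add: z_def)
      have s1a: "\<bar>s1\<bar> = 1" "\<bar>s2\<bar> = 1" by (auto simp: s1_def s2_def)
      have "norm (P z) \<le> 1" using Pz s1a Pnorm[OF w(1)] w(2) by simp
      moreover have "norm (z - P z) \<le> 1" using Pz s1a Pnorm2[OF v(1)] v(2) by (simp add: z_def)
      ultimately have nz: "norm z \<le> 1" using Pn[OF zW] by simp
      have "\<phi> z = s1 * \<phi> (P w) + s2 * \<phi> (v - P v)"
        using Dfacts[OF phi] a1 PW Wdiff v w by (simp add: z_def)
      also have "\<dots> = \<bar>\<phi> (P w)\<bar> + \<bar>\<phi> (v - P v)\<bar>" by (simp add: s1_def s2_def)
      finally have "\<bar>\<phi> (P w)\<bar> + \<bar>\<phi> (v - P v)\<bar> \<le> norm (\<phi> z)" by simp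
      also have "\<dots> \<le> dual_norm W \<phi> * norm z" by (rule Nle[OF phi zW])
      also have "\<dots> \<le> dual_norm W \<phi>" using nz Nnn[OF phi] by (simp add: mult_left_le)
      finally have "\<bar>\<phi> (P w)\<bar> + \<bar>\<phi> (v - P v)\<bar> \<le> dual_norm W \<phi>" .
      moreover have "?R w = \<phi> (P w)" using fun_cong[OF QminD[OF phi], of w] w by simp
      moreover have "Q \<phi> v = \<phi> (v - P v)" using v by (simp add: Q_def)
      ultimately show ?thesis by simp
    qed
    have "norm (?R w) \<le> dual_norm W \<phi> - dual_norm W (Q \<phi>)" if w: "w \<in> W" "norm w \<le> 1" for w
    proof -
      have "dual_norm W (Q \<phi>) \<le> dual_norm W \<phi> - norm (?R w)"
        using pair[OF _ _ w] by (intro dual_norm_least1[OF W0]) (simp add: algebra_simps)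
      then show ?thesis by simp
    qed
    then have "dual_norm W ?R \<le> dual_norm W \<phi> - dual_norm W (Q \<phi>)" by (intro dual_norm_least1[OF W0])
    then show ?thesis using le1 by simp
  qed
  have Qadd: "Q (\<lambda>x. \<phi> x + \<psi> x) = (\<lambda>x. Q \<phi> x + Q \<psi> x)" for \<phi> \<psi> by (auto simp: Q_def)
  have Qsc: "Q (\<lambda>x. c * \<phi> x) = (\<lambda>x. c * Q \<phi> x)" for c \<phi> by (auto simp: Q_def)
  have LQ: "L_projection (scaleR :: real \<Rightarrow> 'a \<Rightarrow> 'a) W Q"
    unfolding L_projection_def
  proof (intro conjI ballI allI)
    fix \<phi> assume "\<phi> \<in> dual_sp scaleR W"
    then have p: "\<phi> \<in> Du" using Du_def by simp
    show "Q \<phi> \<in> dual_sp scaleR W" using QD[OF p] Du_def by simp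
    show "Q (Q \<phi>) = Q \<phi>" by (rule QQ)
    show "dual_norm W \<phi> = dual_norm W (Q \<phi>) + dual_norm W (\<lambda>x. \<phi> x - Q \<phi> x)" by (rule Qsplit[OF p])
  next
    fix \<phi> \<psi> show "Q (\<lambda>x. \<phi> x + \<psi> x) = (\<lambda>x. Q \<phi> x + Q \<psi> x)" by (rule Qadd)
  next
    fix c \<phi> show "Q (\<lambda>x. c * \<phi> x) = (\<lambda>x. c * Q \<phi> x)" by (rule Qsc)
  qed
  have range: "Q ` Du = annihilator (scaleR :: real \<Rightarrow> 'a \<Rightarrow> 'a) W M"
  proof
    show "Q ` Du \<subseteq> annihilator scaleR W M"
    proof
      fix \<psi> assume "\<psi> \<in> Q ` Du"
      then obtain \<phi> where phi: "\<phi> \<in> Du" "\<psi> = Q \<phi>" by blast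
      have "Q \<phi> m = 0" if "m \<in> M" for m
      proof -
        have "m \<in> W" "P m = m" using that Mchar by auto
        then show ?thesis using Dfacts[OF phi(1)] W0 by (simp add: Q_def) (metis add.right_neutral add_left_cancel)
      qed
      then show "\<psi> \<in> annihilator scaleR W M" using QD[OF phi(1)] phi(2) Du_def unfolding annihilator_def by blast
    qed
  next
    show "annihilator scaleR W M \<subseteq> Q ` Du"
    proof
      fix \<phi> assume a: "\<phi> \<in> annihilator scaleR W M"
      then have phi: "\<phi> \<in> Du" and van: "\<And>m. m \<in> M \<Longrightarrow> \<phi> m = 0" unfolding annihilator_def Du_def by auto
      have "Q \<phi> = \<phi>"
      proof
        fix v show "Q \<phi> v = \<phi> v"
        proof (cases "v \<in> W")
          case True
          have "P v \<in> M" using MPW True by blast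
          then have "\<phi> (P v) = 0" by (rule van)
          then show ?thesis using fun_cong[OF QminD[OF phi], of v] True by simp
        next
          case False then show ?thesis using Dfacts[OF phi] by (simp add: Q_def)
        qed
      qed
      then show "\<phi> \<in> Q ` Du" using phi by (metis image_eqI)
    qed
  qed
  show ?thesis unfolding M_ideal_def using ME clM M0 Madd Msc LQ range Du_def by blast
qed



lemma delta_bl:
  assumes A: "complex_JB_triple J T"
  shows "bounded_linear (delta T a b)"
proof -
  have "bounded_linear (\<lambda>x. T a b x - T b a x)" by (intro bounded_linear_sub cJB_bl[OF A])
  moreover have "delta T a b = (\<lambda>x. T a b x - T b a x)" by (simp add: fun_eq_iff delta_def)
  ultimately show ?thesis by simp
qed

lemma delta_J:
  assumes A: "complex_JB_triple J T"
  shows "delta T a b (J x) = J (delta T a b x)"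
  unfolding delta_def using cJB_J3[OF A] linear_diff[OF cJB_linJ[OF A]] by simp

lemma delta_diss_pm:
  assumes A: "complex_JB_triple J T"
  obtains C t0 where "0 \<le> C" "0 < t0"
    "\<And>t x. 0 < t \<Longrightarrow> t \<le> t0 \<Longrightarrow> norm (x + t *\<^sub>R delta T a b x) \<le> (1 + C * t^2) * norm x \<and>
        norm (x - t *\<^sub>R delta T a b x) \<le> (1 + C * t^2) * norm x"
proof -
  obtain C t0 where C: "0 \<le> C" "0 < t0"
    and H: "\<And>t x. \<bar>t\<bar> \<le> t0 \<Longrightarrow> norm (x + t *\<^sub>R delta T a b x) \<le> (1 + C * t^2) * norm x"
    using cJB_diss_delta[OF A, of a b] unfolding diss_op_def by blast
  show ?thesis
  proof (rule that[OF C])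
    fix t x assume t: "0 < t" "t \<le> t0"
    show "norm (x + t *\<^sub>R delta T a b x) \<le> (1 + C * t^2) * norm x \<and>
        norm (x - t *\<^sub>R delta T a b x) \<le> (1 + C * t^2) * norm x"
      using H[of t x] H[of "-t" x] t by simp
  qed
qed

lemma part_complex:
  assumes A: "complex_JB_triple J T" and MI: "M_ideal (cscale J) (UNIV :: 'a::banach set) M"
    and xM: "x \<in> M"
  shows "delta T a b x \<in> M"
proof (rule ccontr)
  assume nM: "delta T a b x \<notin> M"
  define D where "D = delta T a b"
  have bl: "bounded_linear D" unfolding D_def by (rule delta_bl[OF A])
  have lD: "linear D" using bl by (rule bounded_linear.linear)
  obtain CD where CD: "\<And>v. norm (D v) \<le> norm v * CD" using bounded_linear.bounded[OF bl] by blast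
  obtain C t0 where C: "0 \<le> C" "0 < t0"
    and H: "\<And>t v. 0 < t \<Longrightarrow> t \<le> t0 \<Longrightarrow> norm (v + t *\<^sub>R D v) \<le> (1 + C * t^2) * norm v \<and>
        norm (v - t *\<^sub>R D v) \<le> (1 + C * t^2) * norm v"
    using delta_diss_pm[OF A, of a b] unfolding D_def by blast
  have lJ: "linear J" by (rule cJB_linJ[OF A])
  have sm: "\<And>r y. cscale J (of_real r) y = r *\<^sub>R y" by (simp add: cscale_def)
  have Dsm: "D (cscale J c v) = cscale J c (D v)" for c v
    unfolding cscale_def D_def using linear_add[OF lD[unfolded D_def]] linear_scale[OF lD[unfolded D_def]] delta_J[OF A]
    by simp
  have ann: "\<phi> (D x) = 0" if "\<phi> \<in> annihilator (cscale J) UNIV M" for \<phi>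
    by (rule mideal_dissipative[OF MI sm _ _ _ _ _ Dsm _ C(2) C(1) H that xM, where CD=CD])
      (use linear_add[OF lD] CD in \<open>auto simp: mult.commute\<close>)
  obtain f where f: "linear f" "\<And>v. \<bar>f v\<bar> \<le> norm v" "\<And>v. v \<in> M \<Longrightarrow> f v = 0" "f (D x) \<noteq> 0"
  proof -
    have Mf: "closed M" "0 \<in> M" "\<And>u v. u \<in> M \<Longrightarrow> v \<in> M \<Longrightarrow> u + v \<in> M"
      "\<And>c v. v \<in> M \<Longrightarrow> cscale J c v \<in> M"
      using MI unfolding M_ideal_def by blast+
    have Msc: "\<And>r v. v \<in> M \<Longrightarrow> r *\<^sub>R v \<in> M" using Mf(4) sm by metis
    show ?thesis using hb_sep[OF Mf(1,2,3) Msc, of "D x"] nM that unfolding D_def by blast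
  qed
  define \<phi> where "\<phi> v = Complex (f v) (- f (J v))" for v
  have JM: "J v \<in> M" if "v \<in> M" for v
  proof -
    have "cscale J \<i> v \<in> M" using MI that unfolding M_ideal_def by blast
    then show ?thesis by (simp add: cscale_def)
  qed
  have nJ: "\<And>v. norm (J v) = norm v" by (rule cJB_normJ[OF A])
  have "\<phi> \<in> annihilator (cscale J) UNIV M"
    unfolding annihilator_def dual_sp_def
  proof (intro CollectI conjI ballI allI impI)
    fix u v :: 'a
    show "\<phi> (u + v) = \<phi> u + \<phi> v"
      unfolding \<phi>_def using linear_add[OF lJ] linear_add[OF f(1)] by (simp add: complex_eq_iff)
  next
    fix c :: complex and v :: 'a
    have e1: "f (cscale J c v) = Re c * f v + Im c * f (J v)"
      unfolding cscale_def using linear_add[OF f(1)] linear_scale[OF f(1)] by simp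
    have e2: "f (J (cscale J c v)) = Re c * f (J v) - Im c * f v"
      unfolding cscale_def using linear_add[OF f(1)] linear_scale[OF f(1)] linear_add[OF lJ] linear_scale[OF lJ]
        cJB_JJ[OF A] linear_neg[OF f(1)] linear_diff[OF f(1)] by simp
    show "\<phi> (cscale J c v) = c * \<phi> v"
      unfolding \<phi>_def using e1 e2 by (simp add: complex_eq_iff algebra_simps)
  next
    have "norm (\<phi> v) \<le> 2 * norm v" for v
    proof -
      have "norm (\<phi> v) \<le> \<bar>f v\<bar> + \<bar>f (J v)\<bar>" unfolding \<phi>_def using cmod_le[of "Complex (f v) (- f (J v))"] by simp
      also have "\<dots> \<le> norm v + norm (J v)" using f(2) by (intro add_mono) auto
      finally show ?thesis using nJ by simp
    qed
    then show "\<exists>K. \<forall>v\<in>UNIV. norm (\<phi> v) \<le> K * norm v" by blast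
  next
    fix v :: 'a assume "v \<notin> UNIV" then show "\<phi> v = 0" by simp
  next
    fix m assume "m \<in> M"
    then show "\<phi> m = 0" unfolding \<phi>_def using f(3) JM by (simp add: complex_eq_iff)
  qed
  then have "\<phi> (D x) = 0" by (rule ann)
  then show False using f(4) unfolding \<phi>_def by (simp add: complex_eq_iff)
qed

lemma part_real:
  assumes A: "real_JB_triple J T E" and MI: "M_ideal (scaleR :: real \<Rightarrow> 'a::banach \<Rightarrow> 'a) E M"
    and aE: "a \<in> E" and bE: "b \<in> E" and xM: "x \<in> M"
  shows "delta T a b x \<in> M"
proof (rule ccontr)
  assume nM: "delta T a b x \<notin> M"
  have cA: "complex_JB_triple J T" and sE: "subspace E" and TE: "\<forall>x\<in>E. \<forall>y\<in>E. \<forall>z\<in>E. T x y z \<in> E"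
    using A unfolding real_JB_triple_def by blast+
  define D where "D = delta T a b"
  have bl: "bounded_linear D" unfolding D_def by (rule delta_bl[OF cA])
  have lD: "linear D" using bl by (rule bounded_linear.linear)
  obtain CD where CD: "\<And>v. norm (D v) \<le> norm v * CD" using bounded_linear.bounded[OF bl] by blast
  obtain C t0 where C: "0 \<le> C" "0 < t0"
    and H0: "\<And>t v. 0 < t \<Longrightarrow> t \<le> t0 \<Longrightarrow> norm (v + t *\<^sub>R D v) \<le> (1 + C * t^2) * norm v \<and>
        norm (v - t *\<^sub>R D v) \<le> (1 + C * t^2) * norm v"
    using delta_diss_pm[OF cA, of a b] unfolding D_def by blast
  have H: "\<And>t v. 0 < t \<Longrightarrow> t \<le> t0 \<Longrightarrow> v \<in> E \<Longrightarrow> norm (v + t *\<^sub>R D v) \<le> (1 + C * t^2) * norm v \<and>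
        norm (v - t *\<^sub>R D v) \<le> (1 + C * t^2) * norm v" using H0 by blast
  have sm: "\<And>r y. (of_real r :: real) *\<^sub>R y = r *\<^sub>R (y::'a)" by simp
  have DE: "D v \<in> E" if "v \<in> E" for v
    unfolding D_def delta_def using TE aE bE that subspace_diff[OF sE] by blast
  have ann: "\<phi> (D x) = 0" if "\<phi> \<in> annihilator scaleR E M" for \<phi>
    by (rule mideal_dissipative[OF MI sm _ _ _ DE _ _ _ C(2) C(1) H that xM, where CD=CD])
      (use linear_add[OF lD] linear_scale[OF lD] CD subspace_add[OF sE] subspace_scale[OF sE] in \<open>auto simp: mult.commute\<close>)
  have ME: "M \<subseteq> E" using MI unfolding M_ideal_def by blast
  obtain f where f: "linear f" "\<And>v. \<bar>f v\<bar> \<le> norm v" "\<And>v. v \<in> M \<Longrightarrow> f v = 0" "f (D x) \<noteq> 0"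
  proof -
    have Mf: "closed M" "0 \<in> M" "\<And>u v. u \<in> M \<Longrightarrow> v \<in> M \<Longrightarrow> u + v \<in> M"
      "\<And>c v. v \<in> M \<Longrightarrow> c *\<^sub>R v \<in> M"
      using MI unfolding M_ideal_def by blast+
    show ?thesis using hb_sep[OF Mf(1,2,3,4), of "D x"] nM that unfolding D_def by blast
  qed
  define \<phi> where "\<phi> v = (if v \<in> E then f v else 0)" for v
  have "\<phi> \<in> annihilator scaleR E M"
    unfolding annihilator_def dual_sp_def
  proof (intro CollectI conjI ballI allI impI)
    fix u v :: 'a assume "u \<in> E" "v \<in> E"
    then show "\<phi> (u + v) = \<phi> u + \<phi> v"
      unfolding \<phi>_def using linear_add[OF f(1)] subspace_add[OF sE] by simp
  next
    fix c :: real and v :: 'a assume "v \<in> E"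
    then show "\<phi> (c *\<^sub>R v) = c * \<phi> v"
      unfolding \<phi>_def using linear_scale[OF f(1)] subspace_scale[OF sE] by simp
  next
    have "norm (\<phi> v) \<le> 1 * norm v" for v unfolding \<phi>_def using f(2) by simp
    then show "\<exists>K. \<forall>v\<in>E. norm (\<phi> v) \<le> K * norm v" by blast
  next
    fix v :: 'a assume "v \<notin> E" then show "\<phi> v = 0" by (simp add: \<phi>_def)
  next
    fix m assume "m \<in> M"
    then show "\<phi> m = 0" unfolding \<phi>_def using f(3) by simp
  qed
  then have "\<phi> (D x) = 0" by (rule ann)
  moreover have "D x \<in> E" using DE ME xM by blast
  ultimately show False using f(4) unfolding \<phi>_def by simp
qed

theorem corollary3p3:
  fixes J :: "'a::banach \<Rightarrow> 'a" and T :: "'a \<Rightarrow> 'a \<Rightarrow> 'a \<Rightarrow> 'a"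
  shows
    "(complex_JB_triple J T \<and> M_ideal (cscale J) (UNIV :: 'a set) M
        \<longrightarrow> (\<forall>a b. delta T a b ` M \<subseteq> M))
     \<and> (\<forall>E M. real_JB_triple J T E \<and> M_ideal (scaleR :: real \<Rightarrow> 'a \<Rightarrow> 'a) E M
        \<longrightarrow> (\<forall>a\<in>E. \<forall>b\<in>E. delta T a b ` M \<subseteq> M))
     \<and> (\<forall>W M (\<Phi> :: ('p::banach \<Rightarrow>\<^sub>L real) \<Rightarrow> 'a). real_JBW_triple J T W \<Phi> \<and> M_summand W M
        \<longrightarrow> (\<forall>a\<in>W. \<forall>b\<in>W. delta T a b ` M \<subseteq> M))"
proof (intro conjI allI impI ballI)
  show "delta T a b ` M \<subseteq> M" if "complex_JB_triple J T \<and> M_ideal (cscale J) UNIV M" for a b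
    using part_complex that by blast
next
  fix E M' a b
  assume "real_JB_triple J T E \<and> M_ideal scaleR E M'" "a \<in> E" "b \<in> E"
  then show "delta T a b ` M' \<subseteq> M'" using part_real by blast
next
  fix W M' and \<Phi> :: "('p::banach \<Rightarrow>\<^sub>L real) \<Rightarrow> 'a" and a b
  assume H: "real_JBW_triple J T W \<Phi> \<and> M_summand W M'" and ab: "a \<in> W" "b \<in> W"
  have R: "real_JB_triple J T W" using H unfolding real_JBW_triple_def by blast
  then have "closed W" "subspace W" unfolding real_JB_triple_def by blast+
  moreover obtain P where "M_projection W P" "M' = P ` W" using H unfolding M_summand_def by blast
  ultimately have "M_ideal (scaleR :: real \<Rightarrow> 'a \<Rightarrow> 'a) W M'" by (rule msummand_mideal)
  then show "delta T a b ` M' \<subseteq> M'" using part_real[OF R] ab by blast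
qed


end
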